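(* Consider the post-withdrawal-lock phase of the following crowdsale protocol, run in discrete blocks $s = t, t+1, \dots, u$. At every moment the state is a finite set of \emph{active} bids, each bid $A$ having a current amount $v(A) > 0$ and a personal cap $c(A) > 0$; the \emph{valuation} is $V = \sum_{A \text{ active}} v(A)$ (with $V = 0$ if there are no active bids). The set of active bids present at the start of block $t$ is arbitrary (any finite set of bids with positive amounts and positive caps). In each block $s$ with $t \le s \le u$ the protocol performs: Step 1 (receive bids): any finite number of new bids arrive one after another; each new bid $A$ has an amount $v(A) > 0$ and a cap $c(A)$ satisfying $c(A) > V$, where $V$ is the valuation at the moment of its arrival; it is then added to the active set. Step 3 (automatic withdrawals): while there is an active bid $B$ with $V > c(B)$, repeat: let $m = \min\{c(A) : A \text{ active}\}$, let $B_1, \dots, B_k$ be all active bids with $c(B_i) = m$, and let $S = \sum_{i=1}^k v(B_i)$. If $V - S \ge m$, all of $B_1, \dots, B_k$ are refunded in full and removed from the active set. Otherwise, with $q = (V - m)/S$, each $v(B_i)$ is replaced by $(1-q)\, v(B_i)$ (these bids remain active), so that the valuation becomes exactly $m$. The valuation $V$ is recomputed after each iteration. Let $V_s$ denote the valuation at the end of block $s$ (after Step 3). Then for every block $s$ with $t < s \le u$, one has $V_s \ge V_{s-1}$; that is, after the withdrawal lock time $t$ the crowdsale valuation is monotonically non-decreasing, regardless of which bids buyers submit.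
   Context: This models an interactive coin offering smart contract after the "withdrawal lock" time $t$ (no voluntary withdrawals are allowed after $t$). A bid's personal cap $c(A)$ is the maximum total sale valuation at which its owner is willing to participate; if the valuation exceeds it, the bid is (fully or partially) refunded by the automatic-withdrawal step described in the claim. Only active bids count toward the valuation $V$. *)

theory Defs
  imports Complex_Main "HOL-Library.Multiset"
begin

text \<open>A bid is a pair (amount v, personal cap c). The active bids form a finite
multiset of bids (distinct bids may carry identical amount and cap).\<close>
type_synonym bid = "real \<times> real"
type_synonym state = "bid multiset"

definition amount :: "bid \<Rightarrow> real" where "amount b = fst b"
definition cap :: "bid \<Rightarrow> real" where "cap b = snd b"

definition valuation :: "state \<Rightarrow> real" where
  "valuation M = (\<Sum>b\<in>#M. amount b)"

definition valid_state :: "state \<Rightarrow> bool" where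
  "valid_state M \<longleftrightarrow> (\<forall>b\<in>#M. amount b > 0 \<and> cap b > 0)"

definition receive_bid :: "state \<Rightarrow> state \<Rightarrow> bool" where
  "receive_bid M M' \<longleftrightarrow>
     (\<exists>v c. v > 0 \<and> c > valuation M \<and> M' = add_mset (v, c) M)"

definition withdraw_iter :: "state \<Rightarrow> state \<Rightarrow> bool" where
  "withdraw_iter M M' \<longleftrightarrow>
     (\<exists>b\<in>#M. valuation M > cap b) \<and>
     (let m = Min (cap ` set_mset M);
          Bs = filter_mset (\<lambda>b. cap b = m) M;
          S = valuation Bs;
          V = valuation M
      in if V - S \<ge> m then M' = M - Bs
         else (let q = (V - m) / S in
               M' = image_mset (\<lambda>b. if cap b = m then ((1 - q) * amount b, cap b) else b) M))"

definition withdraw_all :: "state \<Rightarrow> state \<Rightarrow> bool" where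
  "withdraw_all M M' \<longleftrightarrow>
     withdraw_iter\<^sup>*\<^sup>* M M' \<and> \<not> (\<exists>b\<in>#M'. valuation M' > cap b)"

definition block :: "state \<Rightarrow> state \<Rightarrow> bool" where
  "block M M' \<longleftrightarrow> (\<exists>M1. receive_bid\<^sup>*\<^sup>* M M1 \<and> withdraw_all M1 M')"

end

theory Submission
  imports Defs
begin

lemma valuation_union: "valuation (A + B) = valuation A + valuation B"
  unfolding valuation_def by simp

lemma valuation_add: "valuation (add_mset x A) = amount x + valuation A"
  unfolding valuation_def by simp

lemma iter_inv:
  assumes w: "withdraw_iter M M'" and c: "\<forall>b\<in>#M. cap b \<ge> V0" and v: "valuation M \<ge> V0"
  shows "(\<forall>b\<in>#M'. cap b \<ge> V0) \<and> valuation M' \<ge> V0"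
proof -
  define m where "m = Min (cap ` set_mset M)"
  define Bs where "Bs = filter_mset (\<lambda>b. cap b = m) M"
  define S where "S = valuation Bs"
  define V where "V = valuation M"
  obtain b0 where b0: "b0 \<in># M" "valuation M > cap b0" using w unfolding withdraw_iter_def by blast
  have mem: "m \<in> cap ` set_mset M" unfolding m_def using b0 by (intro Min_in) auto
  hence mV0: "m \<ge> V0" using c by auto
  have mle: "m \<le> cap b0" unfolding m_def using b0 by (intro Min_le) auto
  have split: "valuation M = valuation Bs + valuation (filter_mset (\<lambda>b. \<not> cap b = m) M)"
    unfolding Bs_def by (metis multiset_partition valuation_union)
  have step: "if V - S \<ge> m then M' = M - Bs
         else (let q = (V - m) / S in
               M' = image_mset (\<lambda>b. if cap b = m then ((1 - q) * amount b, cap b) else b) M)"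
    using w unfolding withdraw_iter_def Let_def m_def Bs_def S_def V_def by auto
  show ?thesis
  proof (cases "V - S \<ge> m")
    case True
    hence M': "M' = M - Bs" using step by simp
    have "M - Bs = filter_mset (\<lambda>b. \<not> cap b = m) M" unfolding Bs_def
      by (metis add_diff_cancel_left' multiset_partition)
    hence "valuation M' = V - S" using split M' V_def S_def by simp
    moreover have "\<forall>b\<in>#M'. cap b \<ge> V0" using c M' by (auto dest: in_diffD)
    ultimately show ?thesis using True mV0 by simp
  next
    case False
    define q where "q = (V - m) / S"
    define f where "f = (\<lambda>b. if cap b = m then ((1 - q) * amount b, cap b) else b)"
    have M': "M' = image_mset f M" using step False unfolding q_def f_def Let_def by simp
    have caps: "\<forall>b\<in>#M'. cap b \<ge> V0" using c M' unfolding f_def by (auto simp: cap_def)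
    have "valuation M' = (\<Sum>b\<in>#M. amount (f b))" unfolding M' valuation_def
      by (simp add: image_mset.compositionality comp_def)
    also have "\<dots> = (\<Sum>b\<in>#Bs. amount (f b)) + (\<Sum>b\<in>#filter_mset (\<lambda>b. \<not> cap b = m) M. amount (f b))"
      unfolding Bs_def by (metis image_mset_union multiset_partition sum_mset.union)
    also have "(\<Sum>b\<in>#Bs. amount (f b)) = (\<Sum>b\<in>#Bs. (1 - q) * amount b)"
      unfolding Bs_def f_def by (intro arg_cong[where f=sum_mset] image_mset_cong) (auto simp: amount_def)
    also have "\<dots> = (1 - q) * S" unfolding S_def valuation_def by (simp add: sum_mset_distrib_left)
    also have "(\<Sum>b\<in>#filter_mset (\<lambda>b. \<not> cap b = m) M. amount (f b)) = V - S"
    proof -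
      have "(\<Sum>b\<in>#filter_mset (\<lambda>b. \<not> cap b = m) M. amount (f b)) = valuation (filter_mset (\<lambda>b. \<not> cap b = m) M)"
        unfolding valuation_def f_def by (intro arg_cong[where f=sum_mset] image_mset_cong) auto
      thus ?thesis using split V_def S_def by simp
    qed
    finally have val: "valuation M' = V - q * S" by (simp add: algebra_simps)
    show ?thesis
    proof (cases "S = 0")
      case True thus ?thesis using val caps v V_def by simp
    next
      case nz: False
      have "q * S = V - m" unfolding q_def using nz by simp
      thus ?thesis using val caps mV0 by simp
    qed
  qed
qed

lemma iter_star_inv:
  assumes "withdraw_iter\<^sup>*\<^sup>* M M'" and "\<forall>b\<in>#M. cap b \<ge> V0" and "valuation M \<ge> V0"
  shows "(\<forall>b\<in>#M'. cap b \<ge> V0) \<and> valuation M' \<ge> V0"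
  using assms by (induction rule: rtranclp_induct) (auto dest: iter_inv)

lemma recv_star_inv:
  assumes "receive_bid\<^sup>*\<^sup>* M M'" and "\<forall>b\<in>#M. cap b \<ge> V0" and "valuation M \<ge> V0"
  shows "(\<forall>b\<in>#M'. cap b \<ge> V0) \<and> valuation M' \<ge> V0"
  using assms
proof (induction rule: rtranclp_induct)
  case base thus ?case by simp
next
  case (step y z)
  then obtain v c where "v > 0" "c > valuation y" "z = add_mset (v, c) y"
    unfolding receive_bid_def by blast
  thus ?case using step by (auto simp: valuation_add amount_def cap_def)
qed

lemma block_mono:
  assumes "block M0 M" and "block M M'"
  shows "valuation M' \<ge> valuation M"
proof -
  have "\<forall>b\<in>#M. cap b \<ge> valuation M" using assms(1) unfolding block_def withdraw_all_def
    by (auto simp: not_less)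
  moreover obtain M1 where "receive_bid\<^sup>*\<^sup>* M M1" "withdraw_all M1 M'"
    using assms(2) unfolding block_def by blast
  ultimately show ?thesis using recv_star_inv iter_star_inv unfolding withdraw_all_def
    by (meson order_refl)
qed

theorem mainTheorem1:
  fixes init :: state and X :: "nat \<Rightarrow> state" and t u :: nat
  assumes "valid_state init"
    and "block init (X t)"
    and "\<And>s. t < s \<Longrightarrow> s \<le> u \<Longrightarrow> block (X (s - 1)) (X s)"
  shows "\<forall>s. t < s \<and> s \<le> u \<longrightarrow> valuation (X s) \<ge> valuation (X (s - 1))"
proof (intro allI impI)
  fix s assume s: "t < s \<and> s \<le> u"
  have prev: "\<exists>M0. block M0 (X (s - 1))"
  proof (cases "s - 1 = t")
    case True thus ?thesis using assms(2) by auto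
  next
    case False
    hence "block (X (s - 1 - 1)) (X (s - 1))" using s by (intro assms(3)) auto
    thus ?thesis by blast
  qed
  then obtain M0 where "block M0 (X (s - 1))" by blast
  thus "valuation (X s) \<ge> valuation (X (s - 1))"
    using block_mono assms(3) s by blast
qed

end
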